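(* Let $F\in\mathcal{F}^n$ with radial function $\rho$. Then for each $x\in\mathbf{S}^n$ and each $N(x)\in\alpha_F(x)$ there exists a unique $v(x)\in\partial\rho(x)$ such that $$N(x)=\frac{-v(x)+\rho(x)x}{\sqrt{|v(x)|^2+\rho^2(x)}},$$ and $$\alpha_F(x)=\left\{\frac{-v(x)+\rho(x)x}{\sqrt{|v(x)|^2+\rho^2(x)}}:\ v(x)\in\partial\rho(x)\right\}.$$
   Context: $\mathbf{S}^n$ is the unit sphere in $\mathbb{R}^{n+1}$, $n\ge1$, centered at the origin $\mathcal{O}$. $\mathcal{F}^n$ is the set of boundaries of compact convex sets in $\mathbb{R}^{n+1}$ containing $\mathcal{O}$ in their interior; for $F\in\mathcal{F}^n$ its radial function $\rho(x)$ is the distance from $\mathcal{O}$ to the point where the ray in direction $x\in\mathbf{S}^n$ meets $F$, and its generalized Gauss map $\alpha_F(x)$ is the set of outward unit normals of all supporting hyperplanes to $F$ at $\rho(x)x$. For $f\in C(\mathbf{S}^n)$ and $x_0\in\mathbf{S}^n$, with $T\mathbf{S}^n_{x_0}=\{v\in\mathbb{R}^{n+1}:\langle v,x_0\rangle=0\}$, the subdifferential is $\partial f(x_0)=\{v\in T\mathbf{S}^n_{x_0}: f(x)\langle -v+f(x_0)x_0,x\rangle\le f^2(x_0)\ \forall x\in\mathbf{S}^n\}$. *)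

theory Defs
  imports "HOL-Analysis.Analysis"
begin

text \<open>R^{n+1} is an abstract euclidean space 'a; S^n is sphere 0 1.
  The class F^n: boundaries of compact convex sets containing the origin in their interior.\<close>
definition convex_boundaries :: "'a::euclidean_space set set" where
  "convex_boundaries = {F. \<exists>K. compact K \<and> convex K \<and> 0 \<in> interior K \<and> F = frontier K}"

definition radial_fun :: "'a::euclidean_space set \<Rightarrow> 'a \<Rightarrow> real" where
  "radial_fun F x = (THE t. t > 0 \<and> t *\<^sub>R x \<in> F)"

definition gen_gauss_map :: "'a::euclidean_space set \<Rightarrow> 'a \<Rightarrow> 'a set" where
  "gen_gauss_map F x = {N. norm N = 1 \<and>
      (\<forall>y\<in>F. N \<bullet> y \<le> N \<bullet> (radial_fun F x *\<^sub>R x))}"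

definition sphere_subdiff :: "('a::euclidean_space \<Rightarrow> real) \<Rightarrow> 'a \<Rightarrow> 'a set" where
  "sphere_subdiff f x0 = {v. v \<bullet> x0 = 0 \<and>
      (\<forall>x\<in>sphere 0 1. f x * ((- v + f x0 *\<^sub>R x0) \<bullet> x) \<le> (f x0)\<^sup>2)}"

end

theory Submission imports Defs begin

lemma ray_unique:
  fixes K :: "'a::euclidean_space set"
  assumes K: "convex K" "0 \<in> interior K"
    and ts: "0 < t" "0 < s" "t *\<^sub>R x \<in> frontier K" "s *\<^sub>R x \<in> frontier K"
  shows "t = s"
proof (rule ccontr)
  have gen: False if "0 < a" "a < b" "a *\<^sub>R x \<in> frontier K" "b *\<^sub>R x \<in> frontier K" for a b
  proof -
    have "b *\<^sub>R x \<in> closure K" using that(4) frontier_def by auto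
    then have "b *\<^sub>R x - (1 - a/b) *\<^sub>R (b *\<^sub>R x - 0) \<in> interior K"
      using mem_interior_closure_convex_shrink[OF K(1) K(2), of "b *\<^sub>R x" "1 - a/b"] that by auto
    moreover have "b *\<^sub>R x - (1 - a/b) *\<^sub>R (b *\<^sub>R x - 0) = a *\<^sub>R x"
      using that by (simp add: algebra_simps)
    ultimately show False using that(3) frontier_def by auto
  qed
  assume "t \<noteq> s"
  then show False using gen ts by (metis linorder_neqE_linordered_idom)
qed

lemma radial_props:
  fixes K :: "'a::euclidean_space set"
  assumes K: "compact K" "convex K" "0 \<in> interior K" and x: "x \<noteq> 0"
  shows "0 < radial_fun (frontier K) x \<and> radial_fun (frontier K) x *\<^sub>R x \<in> frontier K"
proof -
  obtain d where d: "0 < d" "d *\<^sub>R x \<in> frontier K"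
    using ray_to_frontier[OF compact_imp_bounded[OF K(1)] K(3) x] by auto
  have "radial_fun (frontier K) x = d"
    unfolding radial_fun_def
    apply (rule the_equality)
    using d ray_unique[OF K(2,3)] by blast+
  then show ?thesis using d by simp
qed

theorem corollary10:
  fixes F :: "'a::euclidean_space set"
  assumes "DIM('a) \<ge> 2"
    and "F \<in> convex_boundaries"
  shows "\<forall>x\<in>sphere 0 1.
     (\<forall>N\<in>gen_gauss_map F x. \<exists>!v. v \<in> sphere_subdiff (radial_fun F) x \<and>
         N = (1 / sqrt ((norm v)\<^sup>2 + (radial_fun F x)\<^sup>2)) *\<^sub>R (- v + radial_fun F x *\<^sub>R x))
   \<and> gen_gauss_map F x =
       {(1 / sqrt ((norm v)\<^sup>2 + (radial_fun F x)\<^sup>2)) *\<^sub>R (- v + radial_fun F x *\<^sub>R x) | v.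
          v \<in> sphere_subdiff (radial_fun F) x}"
proof
  fix x :: 'a assume xS: "x \<in> sphere 0 1"
  obtain K where K: "compact K" "convex K" "0 \<in> interior K" "F = frontier K"
    using assms(2) unfolding convex_boundaries_def by auto
  define \<rho> where "\<rho> = radial_fun F"
  have rp: "\<And>u. u \<noteq> 0 \<Longrightarrow> 0 < \<rho> u \<and> \<rho> u *\<^sub>R u \<in> F"
    using radial_props[OF K(1-3)] K(4) \<rho>_def by blast
  have x1: "norm x = 1" using xS by simp
  have xx: "x \<bullet> x = 1" using x1 by (simp add: dot_square_norm)
  have x0: "x \<noteq> 0" using x1 by auto
  have rx: "0 < \<rho> x" using rp[OF x0] by simp
  define p where "p = \<rho> x *\<^sub>R x"
  have F0: "\<And>y. y \<in> F \<Longrightarrow> y \<noteq> 0"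
    using K(3,4) frontier_def by auto
  have Fy: "\<And>y. y \<in> F \<Longrightarrow> \<rho> (y /\<^sub>R norm y) *\<^sub>R (y /\<^sub>R norm y) = y"
  proof -
    fix y assume y: "y \<in> F"
    have yn: "norm y > 0" using F0[OF y] by simp
    have u0: "y /\<^sub>R norm y \<noteq> 0" using yn by simp
    have "norm y *\<^sub>R (y /\<^sub>R norm y) \<in> frontier K" using y K(4) yn by simp
    then have "\<rho> (y /\<^sub>R norm y) = norm y"
      using ray_unique[OF K(2,3), of "\<rho> (y /\<^sub>R norm y)" "norm y" "y /\<^sub>R norm y"] rp[OF u0] yn K(4)
      by auto
    then show "\<rho> (y /\<^sub>R norm y) *\<^sub>R (y /\<^sub>R norm y) = y" using yn by simp
  qed
  have equiv: "(\<forall>y\<in>F. w \<bullet> y \<le> c) \<longleftrightarrow> (\<forall>u\<in>sphere 0 1. \<rho> u * (w \<bullet> u) \<le> c)" for w c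
  proof
    assume h: "\<forall>y\<in>F. w \<bullet> y \<le> c"
    show "\<forall>u\<in>sphere 0 1. \<rho> u * (w \<bullet> u) \<le> c"
    proof
      fix u :: 'a assume "u \<in> sphere 0 1"
      then have "u \<noteq> 0" by auto
      then have "\<rho> u *\<^sub>R u \<in> F" using rp by blast
      then show "\<rho> u * (w \<bullet> u) \<le> c" using h by (metis inner_scaleR_right)
    qed
  next
    assume h: "\<forall>u\<in>sphere 0 1. \<rho> u * (w \<bullet> u) \<le> c"
    show "\<forall>y\<in>F. w \<bullet> y \<le> c"
    proof
      fix y assume y: "y \<in> F"
      have "y /\<^sub>R norm y \<in> sphere 0 1" using F0[OF y] by simp
      then have "\<rho> (y /\<^sub>R norm y) * (w \<bullet> (y /\<^sub>R norm y)) \<le> c" using h by blast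
      then have "w \<bullet> (\<rho> (y /\<^sub>R norm y) *\<^sub>R (y /\<^sub>R norm y)) \<le> c" by (metis inner_scaleR_right)
      then show "w \<bullet> y \<le> c" using Fy[OF y] by metis
    qed
  qed
  have wnorm: "norm (- v + \<rho> x *\<^sub>R x) = sqrt ((norm v)\<^sup>2 + (\<rho> x)\<^sup>2)" if "v \<bullet> x = 0" for v
  proof -
    have "(norm (- v + \<rho> x *\<^sub>R x))\<^sup>2 = (- v + \<rho> x *\<^sub>R x) \<bullet> (- v + \<rho> x *\<^sub>R x)"
      by (simp add: dot_square_norm)
    also have "\<dots> = v \<bullet> v - 2 * \<rho> x * (v \<bullet> x) + (\<rho> x)\<^sup>2 * (x \<bullet> x)"
      by (simp add: inner_add_left inner_add_right inner_commute power2_eq_square algebra_simps)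
    also have "\<dots> = (norm v)\<^sup>2 + (\<rho> x)\<^sup>2"
      using that xx by (simp add: power2_norm_eq_inner)
    finally show ?thesis by (metis norm_ge_zero real_sqrt_unique)
  qed
  have wx: "(- v + \<rho> x *\<^sub>R x) \<bullet> x = \<rho> x" if "v \<bullet> x = 0" for v
    using that xx by (simp add: algebra_simps)
  have wp: "(- v + \<rho> x *\<^sub>R x) \<bullet> p = (\<rho> x)\<^sup>2" if "v \<bullet> x = 0" for v
    using wx[OF that] unfolding p_def by (simp add: power2_eq_square)
  have subd: "v \<in> sphere_subdiff \<rho> x \<longleftrightarrow> v \<bullet> x = 0 \<and> (\<forall>y\<in>F. (- v + \<rho> x *\<^sub>R x) \<bullet> y \<le> (\<rho> x)\<^sup>2)" for v
    unfolding sphere_subdiff_def using equiv by auto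
  have gauss: "N \<in> gen_gauss_map F x \<longleftrightarrow> norm N = 1 \<and> (\<forall>y\<in>F. N \<bullet> y \<le> N \<bullet> p)" for N
    unfolding gen_gauss_map_def p_def \<rho>_def by simp
  define G where "G v = (1 / sqrt ((norm v)\<^sup>2 + (\<rho> x)\<^sup>2)) *\<^sub>R (- v + \<rho> x *\<^sub>R x)" for v
  have wpos: "0 < sqrt ((norm v)\<^sup>2 + (\<rho> x)\<^sup>2)" for v using rx
    by (simp add: add_nonneg_pos)
  have into: "G v \<in> gen_gauss_map F x" if v: "v \<in> sphere_subdiff \<rho> x" for v
  proof -
    have v0: "v \<bullet> x = 0" and vs: "\<forall>y\<in>F. (- v + \<rho> x *\<^sub>R x) \<bullet> y \<le> (\<rho> x)\<^sup>2" using v subd by auto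
    let ?s = "sqrt ((norm v)\<^sup>2 + (\<rho> x)\<^sup>2)"
    have "norm (G v) = 1" unfolding G_def using wnorm[OF v0] wpos[of v] rx by simp
    moreover have "G v \<bullet> y \<le> G v \<bullet> p" if y: "y \<in> F" for y
    proof -
      have "(- v + \<rho> x *\<^sub>R x) \<bullet> y \<le> (- v + \<rho> x *\<^sub>R x) \<bullet> p" using vs y wp[OF v0] by simp
      then have "(1/ ?s) * ((- v + \<rho> x *\<^sub>R x) \<bullet> y) \<le> (1/ ?s) * ((- v + \<rho> x *\<^sub>R x) \<bullet> p)"
        using wpos[of v] by (intro mult_left_mono) auto
      then show ?thesis unfolding G_def by simp
    qed
    ultimately show ?thesis using gauss by blast
  qed
  have eu: "\<exists>!v. v \<in> sphere_subdiff \<rho> x \<and> N = G v" if N: "N \<in> gen_gauss_map F x" for N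
  proof -
    have N1: "norm N = 1" and Ns: "\<forall>y\<in>F. N \<bullet> y \<le> N \<bullet> p" using N gauss by auto
    have N0: "N \<noteq> 0" using N1 by auto
    have "\<rho> N *\<^sub>R N \<in> F" "0 < \<rho> N" using rp[OF N0] by auto
    then have "\<rho> N * (N \<bullet> N) \<le> N \<bullet> p" using Ns by (metis inner_scaleR_right)
    moreover have "N \<bullet> N = 1" using N1 by (simp add: dot_square_norm)
    ultimately have "0 < N \<bullet> p" using \<open>0 < \<rho> N\<close> by simp
    then have Nx: "0 < N \<bullet> x" unfolding p_def using rx by (simp add: zero_less_mult_iff)
    define l where "l = \<rho> x / (N \<bullet> x)"
    have l0: "0 < l" using Nx rx l_def by simp
    define v where "v = \<rho> x *\<^sub>R x - l *\<^sub>R N"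
    have v0: "v \<bullet> x = 0" unfolding v_def l_def using Nx xx by (simp add: algebra_simps)
    have wv: "- v + \<rho> x *\<^sub>R x = l *\<^sub>R N" unfolding v_def by simp
    have sv: "sqrt ((norm v)\<^sup>2 + (\<rho> x)\<^sup>2) = l" using wnorm[OF v0] wv N1 l0 by simp
    have Gv: "G v = N" unfolding G_def sv wv using l0 by simp
    have vin: "v \<in> sphere_subdiff \<rho> x"
    proof -
      have "\<forall>y\<in>F. (- v + \<rho> x *\<^sub>R x) \<bullet> y \<le> (\<rho> x)\<^sup>2"
      proof
        fix y assume "y \<in> F"
        then have "l * (N \<bullet> y) \<le> l * (N \<bullet> p)" using Ns l0 by (intro mult_left_mono) auto
        then have "(- v + \<rho> x *\<^sub>R x) \<bullet> y \<le> (- v + \<rho> x *\<^sub>R x) \<bullet> p" unfolding wv by simp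
        then show "(- v + \<rho> x *\<^sub>R x) \<bullet> y \<le> (\<rho> x)\<^sup>2" using wp[OF v0] by simp
      qed
      then show ?thesis using subd v0 by blast
    qed
    have uniq: "v' = v" if v': "v' \<in> sphere_subdiff \<rho> x" "N = G v'" for v'
    proof -
      have v'0: "v' \<bullet> x = 0" using v' subd by auto
      let ?s = "sqrt ((norm v')\<^sup>2 + (\<rho> x)\<^sup>2)"
      have e1: "- v' + \<rho> x *\<^sub>R x = ?s *\<^sub>R N" using v'(2) wpos[of v'] unfolding G_def by simp
      have "\<rho> x = ?s * (N \<bullet> x)" using wx[OF v'0] e1 by (metis inner_scaleR_left)
      then have "?s = l" unfolding l_def using Nx by (simp add: field_simps)
      then have "- v' + \<rho> x *\<^sub>R x = - v + \<rho> x *\<^sub>R x" using e1 wv by simp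
      then show ?thesis by simp
    qed
    show ?thesis using vin Gv uniq by blast
  qed
  have eq: "gen_gauss_map F x = {G v | v. v \<in> sphere_subdiff \<rho> x}"
  proof
    show "gen_gauss_map F x \<subseteq> {G v | v. v \<in> sphere_subdiff \<rho> x}"
      using eu by blast
    show "{G v | v. v \<in> sphere_subdiff \<rho> x} \<subseteq> gen_gauss_map F x"
      using into by blast
  qed
  show "(\<forall>N\<in>gen_gauss_map F x. \<exists>!v. v \<in> sphere_subdiff (radial_fun F) x \<and>
         N = (1 / sqrt ((norm v)\<^sup>2 + (radial_fun F x)\<^sup>2)) *\<^sub>R (- v + radial_fun F x *\<^sub>R x))
   \<and> gen_gauss_map F x =
       {(1 / sqrt ((norm v)\<^sup>2 + (radial_fun F x)\<^sup>2)) *\<^sub>R (- v + radial_fun F x *\<^sub>R x) | v.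
          v \<in> sphere_subdiff (radial_fun F) x}"
    using eu eq unfolding G_def \<rho>_def by blast
qed

end
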